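(* Let $(Q,\infty)$, $\alpha$, $V$, $0\in I$, $L$, $\tilde Q$, $\tilde V$, $\zeta\in\mathbb R^{I}$ and $\eta\in(\mathbb Q_{>0})^{L}$ be as in the context. If a representation $\tilde\rho\in\mathrm{Rep}_{\tilde Q}(\tilde V)$ is $(\zeta,\eta)$-semistable, then the linear map $\tilde V_{(0,L)}\to V_{0}$ (attached to the arrow $(0,L)\to 0$) is an isomorphism, and the linear maps $\tilde V_{(0,k)}\to\tilde V_{(0,k+1)}$ (attached to the arrows $(0,k)\to(0,k+1)$) are injective for all $k=1,\dots,L-1$.
   Context: A framed quiver is a quiver with relations $Q=(Q_0,Q_1,Q_2)$ (vertices $Q_0$; arrows $Q_1$, an arrow $a$ going from $\mathrm{out}(a)$ to $\mathrm{in}(a)$; $Q_2$ a finite set of relations, each a linear combination of paths with common beginning $\mathrm{out}(l)$ and common ending $\mathrm{in}(l)$) together with a vertex $\infty\in Q_0$; put $I=Q_0\setminus\{\infty\}$ and assume $\mathrm{out}(l),\mathrm{in}(l)\in I$ for all $l\in Q_2$. A representation of a quiver with relations on a graded vector space is a collection of linear maps $B_a$, one for each arrow, satisfying the relations. Fix a finite-dimensional $Q_0$-graded vector space $V=\bigoplus_{v\in Q_0}V_v$ with $\dim V_\infty=1$ and put $\alpha_v=\dim V_v$, $\dim V=\sum_{v\in Q_0}\dim V_v$. Fix $0\in I$ and an integer $L\ge\alpha_0$. The enhanced quiver $\tilde Q$ has vertex set $\tilde Q_0=Q_0\sqcup\{(0,k)\mid k=1,\dots,L\}$, arrow set $Q_1$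 together with arrows $(0,k)\to(0,k+1)$ for $k=1,\dots,L-1$ and one arrow $(0,L)\to 0$, and relations $Q_2$. Let $\tilde V=V\oplus\bigoplus_{k=1}^{L}\tilde V_{(0,k)}$ be a $\tilde Q_0$-graded vector space with $\dim\tilde V_{(0,1)}\le1$, $\dim\tilde V_{(0,L)}=\alpha_0$, and $\dim\tilde V_{(0,k-1)}\le\dim\tilde V_{(0,k)}\le\dim\tilde V_{(0,k-1)}+1$ for $k=2,\dots,L-1$. For $\zeta\in\mathbb R^I$ put $\zeta_\infty=-\sum_{i\in I}\zeta_i\alpha_i$. For $\eta=(\eta_1,\dots,\eta_L)\in(\mathbb Q_{>0})^L$ and a $\tilde Q_0$-graded subspace $\tilde S=S\oplus\bigoplus_k\tilde S_{(0,k)}$ (with $S$ its $Q_0$-graded part) define $\mu_{(\zeta,\eta)}(\tilde S)=\dfrac{\sum_{v\in Q_0}\zeta_v\dim S_v+\sum_{k=1}^{L}\eta_k\dim\tilde S_{(0,k)}}{\sum_{v\in Q_0}\dim S_v}$. A representation $\tilde\rho$ of $\tilde Q$ on $\tilde V$ is $(\zeta,\eta)$-semistable if every nonzero proper sub-representation $\tilde S$ satisfies $\mu_{(\zeta,\eta)}(\tilde S)\le\mu_{(\zeta,\eta)}(\tilde V)$, where this inequality is understood in the cleared-denominator form $\big(\sum_{v}\zeta_v\dim S_v+\sum_k\eta_k\dim\tilde S_{(0,k)}\big)\dim V-\big(\sum_k\eta_k\dim\tilde V_{(0,k)}\big)\sum_v\dim S_v\le0$ (equivalent to the slope inequality when $\sum_v\dim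 S_v>0$). *)

theory Defs
  imports Complex_Main "HOL-Library.Function_Algebras"
begin

text \<open>Vectors of a graded piece of dimension n are modelled as functions
  nat => complex vanishing from index n on; linear maps as matrices.\<close>

type_synonym cvec = "nat \<Rightarrow> complex"

definition cscale :: "complex \<Rightarrow> cvec \<Rightarrow> cvec" where
  "cscale c x = (\<lambda>j. c * x j)"

definition carrier_sp :: "nat \<Rightarrow> cvec set" where
  "carrier_sp n = {x. \<forall>j\<ge>n. x j = 0}"

definition mat_app :: "nat \<Rightarrow> nat \<Rightarrow> (nat \<Rightarrow> nat \<Rightarrow> complex) \<Rightarrow> cvec \<Rightarrow> cvec" where
  "mat_app m n M x = (\<lambda>i. if i < m then (\<Sum>j<n. M i j * x j) else 0)"

definition vdim :: "cvec set \<Rightarrow> nat" where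
  "vdim S = vector_space.dim cscale S"

definition vsubspace :: "cvec set \<Rightarrow> bool" where
  "vsubspace S = module.subspace cscale S"

text \<open>Quiver with relations. A relation is (out(l), in(l), formal linear
  combination of paths); a path is a list of arrows in traversal order
  (the empty list is the trivial path).\<close>
record ('v, 'a) quiver_rel =
  verts :: "'v set"
  arrs :: "'a set"
  src :: "'a \<Rightarrow> 'v"
  tgt :: "'a \<Rightarrow> 'v"
  rels :: "('v \<times> 'v \<times> (complex \<times> 'a list) list) set"

definition is_path :: "('v, 'a) quiver_rel \<Rightarrow> 'v \<Rightarrow> 'v \<Rightarrow> 'a list \<Rightarrow> bool" where
  "is_path Q u w p \<longleftrightarrow>
     (p = [] \<and> u = w) \<or>
     (p \<noteq> [] \<and> set p \<subseteq> arrs Q \<and> src Q (hd p) = u \<and> tgt Q (last p) = w \<and>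
      (\<forall>i. i + 1 < length p \<longrightarrow> tgt Q (p ! i) = src Q (p ! (i + 1))))"

definition quiver_wf :: "('v, 'a) quiver_rel \<Rightarrow> bool" where
  "quiver_wf Q \<longleftrightarrow> finite (verts Q) \<and> finite (arrs Q) \<and> finite (rels Q) \<and>
     (\<forall>a\<in>arrs Q. src Q a \<in> verts Q \<and> tgt Q a \<in> verts Q) \<and>
     (\<forall>(u, w, ts)\<in>rels Q. u \<in> verts Q \<and> w \<in> verts Q \<and>
        (\<forall>(c, p)\<in>set ts. is_path Q u w p))"

definition framed_quiver :: "('v, 'a) quiver_rel \<Rightarrow> 'v \<Rightarrow> bool" where
  "framed_quiver Q infv \<longleftrightarrow> quiver_wf Q \<and> infv \<in> verts Q \<and>
     (\<forall>(u, w, ts)\<in>rels Q. u \<noteq> infv \<and> w \<noteq> infv)"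

definition path_map :: "('v, 'a) quiver_rel \<Rightarrow> ('v \<Rightarrow> nat) \<Rightarrow> ('a \<Rightarrow> nat \<Rightarrow> nat \<Rightarrow> complex)
    \<Rightarrow> 'a list \<Rightarrow> cvec \<Rightarrow> cvec" where
  "path_map Q d B p x = foldl (\<lambda>y a. mat_app (d (tgt Q a)) (d (src Q a)) (B a) y) x p"

definition is_rep :: "('v, 'a) quiver_rel \<Rightarrow> ('v \<Rightarrow> nat) \<Rightarrow> ('a \<Rightarrow> nat \<Rightarrow> nat \<Rightarrow> complex) \<Rightarrow> bool" where
  "is_rep Q d B \<longleftrightarrow>
     (\<forall>(u, w, ts)\<in>rels Q. \<forall>x\<in>carrier_sp (d u). \<forall>j.
        (\<Sum>(c, p)\<leftarrow>ts. c * path_map Q d B p x j) = 0)"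

definition is_subrep :: "('v, 'a) quiver_rel \<Rightarrow> ('v \<Rightarrow> nat) \<Rightarrow> ('a \<Rightarrow> nat \<Rightarrow> nat \<Rightarrow> complex)
    \<Rightarrow> ('v \<Rightarrow> cvec set) \<Rightarrow> bool" where
  "is_subrep Q d B S \<longleftrightarrow>
     (\<forall>v\<in>verts Q. vsubspace (S v) \<and> S v \<subseteq> carrier_sp (d v)) \<and>
     (\<forall>a\<in>arrs Q. mat_app (d (tgt Q a)) (d (src Q a)) (B a) ` S (src Q a) \<subseteq> S (tgt Q a))"

definition nonzero_proper :: "('v, 'a) quiver_rel \<Rightarrow> ('v \<Rightarrow> nat) \<Rightarrow> ('v \<Rightarrow> cvec set) \<Rightarrow> bool" where
  "nonzero_proper Q d S \<longleftrightarrow>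
     (\<exists>v\<in>verts Q. S v \<noteq> {0}) \<and> (\<exists>v\<in>verts Q. S v \<noteq> carrier_sp (d v))"

text \<open>Enhanced quiver: Inl v are the old vertices, Inr k the vertex (0,k);
  arrow Inr k goes (0,k) -> (0,k+1) for k < L and (0,L) -> 0 for k = L.\<close>
definition enhanced :: "('v, 'a) quiver_rel \<Rightarrow> 'v \<Rightarrow> nat \<Rightarrow> ('v + nat, 'a + nat) quiver_rel" where
  "enhanced Q z L =
    \<lparr> verts = Inl ` verts Q \<union> Inr ` {1..L},
      arrs = Inl ` arrs Q \<union> Inr ` {1..L},
      src = case_sum (\<lambda>a. Inl (src Q a)) (\<lambda>k. Inr k),
      tgt = case_sum (\<lambda>a. Inl (tgt Q a)) (\<lambda>k. if k < L then Inr (k + 1) else Inl z),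
      rels = (\<lambda>(u, w, ts). (Inl u, Inl w, map (\<lambda>(c, p). (c, map Inl p)) ts)) ` rels Q \<rparr>"

definition zeta_ext :: "('v, 'a) quiver_rel \<Rightarrow> 'v \<Rightarrow> ('v \<Rightarrow> nat) \<Rightarrow> ('v \<Rightarrow> real) \<Rightarrow> 'v \<Rightarrow> real" where
  "zeta_ext Q infv \<alpha> \<zeta> v =
     (if v = infv then - (\<Sum>i\<in>verts Q - {infv}. \<zeta> i * real (\<alpha> i)) else \<zeta> v)"

text \<open>(zeta,eta)-semistability of a representation B of the enhanced quiver
  with dimension vector case_sum alpha beta, in cleared-denominator form.\<close>
definition semistable :: "('v, 'a) quiver_rel \<Rightarrow> 'v \<Rightarrow> 'v \<Rightarrow> nat \<Rightarrow> ('v \<Rightarrow> nat) \<Rightarrow> (nat \<Rightarrow> nat)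
    \<Rightarrow> ('v \<Rightarrow> real) \<Rightarrow> (nat \<Rightarrow> rat) \<Rightarrow> ('a + nat \<Rightarrow> nat \<Rightarrow> nat \<Rightarrow> complex) \<Rightarrow> bool" where
  "semistable Q infv z L \<alpha> \<beta> \<zeta> \<eta> B \<longleftrightarrow>
     (\<forall>S. is_subrep (enhanced Q z L) (case_sum \<alpha> \<beta>) B S \<and>
          nonzero_proper (enhanced Q z L) (case_sum \<alpha> \<beta>) S \<longrightarrow>
        ((\<Sum>v\<in>verts Q. zeta_ext Q infv \<alpha> \<zeta> v * real (vdim (S (Inl v))))
           + (\<Sum>k=1..L. real_of_rat (\<eta> k) * real (vdim (S (Inr k)))))
          * real (\<Sum>v\<in>verts Q. \<alpha> v)
        - (\<Sum>k=1..L. real_of_rat (\<eta> k) * real (\<beta> k))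
          * real (\<Sum>v\<in>verts Q. vdim (S (Inl v))) \<le> 0)"

end

theory Submission
  imports Defs
begin



lemma vs_cscale: "vector_space cscale"
  unfolding vector_space_def cscale_def by (auto simp: fun_eq_iff algebra_simps)

interpretation cv: vector_space cscale by (rule vs_cscale)

lemma mod_cscale: "module cscale"
  using vs_cscale module_iff_vector_space by blast

lemma mat_app_hom: "module_hom cscale cscale (mat_app m n M)"
proof -
  have "module_hom_axioms cscale cscale (mat_app m n M)"
    unfolding module_hom_axioms_def mat_app_def cscale_def
    by (auto simp: fun_eq_iff algebra_simps sum.distrib sum_distrib_left)
  then show ?thesis using mod_cscale by (simp add: module_hom_def)
qed

lemma mat_app_0: "mat_app m n M 0 = 0"
  by (simp add: mat_app_def fun_eq_iff)

lemma mat_app_carrier: "mat_app m n M x \<in> carrier_sp m"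
  by (simp add: mat_app_def carrier_sp_def)

definition ev :: "nat \<Rightarrow> cvec" where "ev j = (\<lambda>i. if i = j then 1 else 0)"

lemma ev_inj: "inj ev"
  by (auto simp: inj_def ev_def fun_eq_iff split: if_splits)

lemma carrier_subspace: "cv.subspace (carrier_sp n)"
  unfolding cv.subspace_def carrier_sp_def cscale_def by auto

lemma sum_apply_cvec: "(\<Sum>x\<in>A. f x) j = (\<Sum>x\<in>A. (f x :: cvec) j)"
  by (induction A rule: infinite_finite_induct) auto

lemma sum_delta1: "(\<Sum>j<(n::nat). (c j::complex) * (if a = j then 1 else 0)) = (if a < n then c a else 0)"
proof -
  have "(\<Sum>j<(n::nat). (c j::complex) * (if a = j then 1 else 0)) = (\<Sum>j<n. if a = j then c j else 0)"
    by (rule sum.cong) auto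
  also have "\<dots> = (if a \<in> {..<n} then c a else 0)" by (rule sum.delta') simp
  finally show ?thesis by simp
qed

lemma sum_delta2: "(\<Sum>j<(n::nat). (c j::complex) * (if j = a then 1 else 0)) = (if a < n then c a else 0)"
proof -
  have "(\<Sum>j<(n::nat). (c j::complex) * (if j = a then 1 else 0)) = (\<Sum>j<n. if a = j then c j else 0)"
    by (rule sum.cong) auto
  also have "\<dots> = (if a \<in> {..<n} then c a else 0)" by (rule sum.delta') simp
  finally show ?thesis by simp
qed

lemma carrier_span: "carrier_sp n = cv.span (ev ` {..<n})"
proof
  show "carrier_sp n \<subseteq> cv.span (ev ` {..<n})"
  proof
    fix x assume x: "x \<in> carrier_sp n"
    have "x = (\<Sum>j<n. cscale (x j) (ev j))"
      using x by (auto simp: fun_eq_iff sum_apply_cvec cscale_def ev_def carrier_sp_def sum_delta1)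
    also have "\<dots> \<in> cv.span (ev ` {..<n})"
      by (intro cv.span_sum cv.span_scale cv.span_base) auto
    finally show "x \<in> cv.span (ev ` {..<n})" .
  qed
  show "cv.span (ev ` {..<n}) \<subseteq> carrier_sp n"
    by (rule cv.span_minimal[OF _ carrier_subspace]) (auto simp: carrier_sp_def ev_def)
qed

lemma ev_indep: "cv.independent (ev ` {..<n})"
proof (rule cv.independent_if_scalars_zero)
  fix f x assume s: "(\<Sum>x\<in>ev ` {..<n}. cscale (f x) x) = 0" and x: "x \<in> ev ` {..<n}"
  then obtain j where j: "j < n" "x = ev j" by auto
  have "(\<Sum>x\<in>ev ` {..<n}. cscale (f x) x) j = (\<Sum>i<n. f (ev i) * ev i j)"
    by (simp add: sum_apply_cvec sum.reindex inj_on_subset[OF ev_inj] cscale_def)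
  also have "\<dots> = f (ev j)" using j by (simp add: ev_def sum_delta2 sum_delta1)
  finally show "f x = 0" using s j by simp
qed simp

lemma card_ev: "card (ev ` {..<n}) = n"
  by (simp add: card_image inj_on_subset[OF ev_inj])

lemma dim_pos:
  assumes "K \<subseteq> carrier_sp n" "K \<noteq> {0}" "cv.subspace K"
  shows "vdim K > 0"
proof -
  obtain Bs where B: "Bs \<subseteq> K" "cv.independent Bs" "K \<subseteq> cv.span Bs" "card Bs = cv.dim K"
    using cv.basis_exists by blast
  have "finite Bs" using cv.independent_span_bound[of "ev ` {..<n}" Bs] B assms(1) carrier_span
    by auto
  moreover have "Bs \<noteq> {}"
  proof
    assume "Bs = {}"
    then have "K \<subseteq> {0}" using B by simp
    moreover have "0 \<in> K" using assms(3) cv.subspace_0 by blast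
    ultimately show False using assms(2) by blast
  qed
  ultimately show ?thesis using B(4) card_gt_0_iff unfolding vdim_def by metis
qed


lemma inj_surj:
  assumes inj: "inj_on (mat_app n n M) (carrier_sp n)"
  shows "mat_app n n M ` carrier_sp n = carrier_sp n"
proof -
  interpret h: module_hom cscale cscale "mat_app n n M" by (rule mat_app_hom)
  let ?f = "mat_app n n M" and ?E = "ev ` {..<n}"
  have CS: "carrier_sp n = cv.span ?E" by (rule carrier_span)
  have inj': "inj_on ?f (cv.span ?E)" using inj unfolding CS .
  have ind: "cv.independent (?f ` ?E)"
    by (rule h.independent_injective_image[OF ev_indep inj'])
  have Esub: "?E \<subseteq> carrier_sp n" unfolding CS by (rule cv.span_superset)
  have injE: "inj_on ?f ?E" by (rule inj_on_subset[OF inj Esub])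
  have cardf: "card (?f ` ?E) = n"
    using card_image[OF injE] card_ev by simp
  have sub: "?f ` carrier_sp n \<subseteq> carrier_sp n" using mat_app_carrier by blast
  have fEsub: "?f ` ?E \<subseteq> carrier_sp n" using Esub sub by blast
  have "carrier_sp n \<subseteq> cv.span (?f ` ?E)"
  proof
    fix y assume y: "y \<in> carrier_sp n"
    show "y \<in> cv.span (?f ` ?E)"
    proof (rule ccontr)
      assume ny: "y \<notin> cv.span (?f ` ?E)"
      have nin: "y \<notin> ?f ` ?E" using ny cv.span_base[of y "?f ` ?E"] by blast
      have i2: "cv.independent (insert y (?f ` ?E))"
        using ind ny nin cv.independent_insert[of y "?f ` ?E"] by simp
      have "insert y (?f ` ?E) \<subseteq> carrier_sp n" using y fEsub by blast
      then have isub: "insert y (?f ` ?E) \<subseteq> cv.span ?E" unfolding CS .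
      have "finite (insert y (?f ` ?E)) \<and> card (insert y (?f ` ?E)) \<le> card ?E"
        by (rule cv.independent_span_bound[OF _ i2 isub]) simp
      then have c: "card (insert y (?f ` ?E)) \<le> n" using card_ev by simp
      have "finite (?f ` ?E)" by simp
      then have "card (insert y (?f ` ?E)) = Suc n" using nin cardf by simp
      then show False using c by simp
    qed
  qed
  moreover have "cv.span (?f ` ?E) = ?f ` carrier_sp n"
    unfolding CS by (rule h.span_image)
  ultimately show ?thesis using sub by blast
qed

lemma vdim_zero: "vdim {0} = 0"
proof -
  have "cv.span {} = cv.span {0}" by simp
  then have "cv.dim {0} = card {}" using cv.dim_eq_card[of "{}" "{0}"] cv.independent_empty by simp
  then show ?thesis by (simp add: vdim_def)
qed

lemma zero_subspace: "vsubspace {0}"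
  unfolding vsubspace_def cv.subspace_def cscale_def by (auto simp: fun_eq_iff)

lemma zero_carrier: "0 \<in> carrier_sp n"
  by (simp add: carrier_sp_def)

lemma inj_from_kernel:
  assumes "\<forall>x\<in>carrier_sp n. mat_app m n M x = 0 \<longrightarrow> x = 0"
  shows "inj_on (mat_app m n M) (carrier_sp n)"
proof (rule inj_onI)
  interpret h: module_hom cscale cscale "mat_app m n M" by (rule mat_app_hom)
  fix x y assume x: "x \<in> carrier_sp n" and y: "y \<in> carrier_sp n" and e: "mat_app m n M x = mat_app m n M y"
  have "x - y \<in> carrier_sp n" using x y by (simp add: carrier_sp_def)
  moreover have "mat_app m n M (x - y) = 0" using e h.diff by simp
  ultimately have "x - y = 0" using assms by blast
  then show "x = y" by simp
qed

lemma kernel_subspace: "vsubspace {x \<in> carrier_sp n. mat_app m n M x = 0}"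
proof -
  interpret h: module_hom cscale cscale "mat_app m n M" by (rule mat_app_hom)
  show ?thesis
    unfolding vsubspace_def cv.subspace_def
    using h.add h.scale mat_app_0 by (auto simp: carrier_sp_def cscale_def)
qed

lemma one_ne: "{0} \<noteq> carrier_sp (Suc 0)"
proof -
  have "ev 0 \<in> carrier_sp (Suc 0)" by (simp add: ev_def carrier_sp_def)
  moreover have "ev 0 \<noteq> 0" by (auto simp: ev_def fun_eq_iff)
  ultimately show ?thesis by blast
qed


theorem lemma3p1:
  fixes Q :: "('v, 'a) quiver_rel" and infv z :: 'v and L :: nat
    and \<alpha> :: "'v \<Rightarrow> nat" and \<beta> :: "nat \<Rightarrow> nat"
    and \<zeta> :: "'v \<Rightarrow> real" and \<eta> :: "nat \<Rightarrow> rat"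
    and B :: "'a + nat \<Rightarrow> nat \<Rightarrow> nat \<Rightarrow> complex"
  assumes "framed_quiver Q infv"
    and "\<alpha> infv = 1"
    and "z \<in> verts Q" and "z \<noteq> infv"
    and "L \<ge> 1" and "L \<ge> \<alpha> z"
    and "\<beta> 1 \<le> 1" and "\<beta> L = \<alpha> z"
    and "\<forall>k\<in>{2..L - 1}. \<beta> (k - 1) \<le> \<beta> k \<and> \<beta> k \<le> \<beta> (k - 1) + 1"
    and "\<forall>k\<in>{1..L}. \<eta> k > 0"
    and "is_rep (enhanced Q z L) (case_sum \<alpha> \<beta>) B"
    and "semistable Q infv z L \<alpha> \<beta> \<zeta> \<eta> B"
  shows "bij_betw (mat_app (\<alpha> z) (\<beta> L) (B (Inr L))) (carrier_sp (\<beta> L)) (carrier_sp (\<alpha> z))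
    \<and> (\<forall>k\<in>{1..<L}. inj_on (mat_app (\<beta> (k + 1)) (\<beta> k) (B (Inr k))) (carrier_sp (\<beta> k)))"
proof -
  let ?E = "enhanced Q z L" and ?d = "case_sum \<alpha> \<beta>"
  have finQ: "finite (verts Q)" and infQ: "infv \<in> verts Q"
    using assms(1) by (auto simp: framed_quiver_def quiver_wf_def)
  have sumpos: "real (\<Sum>v\<in>verts Q. \<alpha> v) > 0"
  proof -
    have "\<alpha> infv \<le> (\<Sum>v\<in>verts Q. \<alpha> v)" using member_le_sum[OF infQ, of \<alpha>] finQ by simp
    then have "(\<Sum>v\<in>verts Q. \<alpha> v) > 0" using assms(2) by simp
    then show ?thesis by (simp only: of_nat_0_less_iff)
  qed
  have key: "\<forall>x\<in>carrier_sp (\<beta> k0). mat_app (if k0 < L then \<beta> (k0 + 1) else \<alpha> z) (\<beta> k0) (B (Inr k0)) x = 0 \<longrightarrow> x = 0"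
    if k0: "k0 \<in> {1..L}" for k0
  proof (rule ccontr)
    define m where "m = (if k0 < L then \<beta> (k0 + 1) else \<alpha> z)"
    define f where "f = mat_app m (\<beta> k0) (B (Inr k0))"
    define K where "K = {x \<in> carrier_sp (\<beta> k0). f x = 0}"
    define S where "S = (\<lambda>v::'v + nat. if v = Inr k0 then K else ({0}::cvec set))"
    assume "\<not> ?thesis"
    then obtain x where x: "x \<in> K" "x \<noteq> 0" unfolding K_def f_def m_def by blast
    have K0: "0 \<in> K" unfolding K_def f_def by (simp add: zero_carrier mat_app_0)
    have Kne: "K \<noteq> {0}" using x by blast
    have Ksub: "vsubspace K" unfolding K_def f_def by (rule kernel_subspace)
    have Kc: "K \<subseteq> carrier_sp (\<beta> k0)" unfolding K_def by blast
    have S0: "0 \<in> S v" for v using K0 by (simp add: S_def)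
    have tgtd: "mat_app (?d (tgt ?E (Inr k0))) (?d (src ?E (Inr k0))) (B (Inr k0)) = f"
      unfolding f_def m_def by (simp add: enhanced_def)
    have sub: "is_subrep ?E ?d B S"
      unfolding is_subrep_def
    proof (intro conjI ballI)
      fix v assume "v \<in> verts ?E"
      show "vsubspace (S v)" using Ksub zero_subspace by (simp add: S_def)
      show "S v \<subseteq> carrier_sp (?d v)"
      proof (cases "v = Inr k0")
        case True then show ?thesis using Kc by (simp add: S_def)
      next
        case False then have "S v = {0}" by (simp add: S_def)
        then show ?thesis using zero_carrier by simp
      qed
    next
      fix a assume a: "a \<in> arrs ?E"
      show "mat_app (?d (tgt ?E a)) (?d (src ?E a)) (B a) ` S (src ?E a) \<subseteq> S (tgt ?E a)"
      proof (cases "a = Inr k0")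
        case True
        have "src ?E a = Inr k0" using True by (simp add: enhanced_def)
        moreover have "S (Inr k0) = K" by (simp add: S_def)
        ultimately have img: "mat_app (?d (tgt ?E a)) (?d (src ?E a)) (B a) ` S (src ?E a) = f ` K"
          using True tgtd by simp
        have "f ` K \<subseteq> {0}" by (auto simp: K_def)
        moreover have "{0} \<subseteq> S (tgt ?E a)" using S0 by blast
        ultimately show ?thesis unfolding img by blast
      next
        case False
        then have "src ?E a \<noteq> Inr k0" by (cases a) (auto simp: enhanced_def)
        then have "S (src ?E a) = {0}" by (simp add: S_def)
        then show ?thesis using S0[of "tgt ?E a"] by (simp add: mat_app_0)
      qed
    qed
    have np: "nonzero_proper ?E ?d S"
      unfolding nonzero_proper_def
    proof
      show "\<exists>v\<in>verts ?E. S v \<noteq> {0}"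
        using k0 Kne by (intro bexI[of _ "Inr k0"]) (auto simp: S_def enhanced_def)
      show "\<exists>v\<in>verts ?E. S v \<noteq> carrier_sp (?d v)"
        using infQ one_ne assms(2) by (intro bexI[of _ "Inl infv"]) (auto simp: S_def enhanced_def)
    qed
    have ineq: "((\<Sum>v\<in>verts Q. zeta_ext Q infv \<alpha> \<zeta> v * real (vdim (S (Inl v))))
           + (\<Sum>k=1..L. real_of_rat (\<eta> k) * real (vdim (S (Inr k)))))
          * real (\<Sum>v\<in>verts Q. \<alpha> v)
        - (\<Sum>k=1..L. real_of_rat (\<eta> k) * real (\<beta> k))
          * real (\<Sum>v\<in>verts Q. vdim (S (Inl v))) \<le> 0"
      using assms(12)[unfolded semistable_def, rule_format, OF conjI[OF sub np]] .
    have s1: "(\<Sum>v\<in>verts Q. zeta_ext Q infv \<alpha> \<zeta> v * real (vdim (S (Inl v)))) = 0"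
      by (simp add: S_def vdim_zero)
    have s2: "(\<Sum>v\<in>verts Q. vdim (S (Inl v))) = 0"
      by (simp add: S_def vdim_zero)
    have "(\<Sum>k=1..L. real_of_rat (\<eta> k) * real (vdim (S (Inr k))))
        = (\<Sum>k\<in>{1..L}. if k = k0 then real_of_rat (\<eta> k0) * real (vdim K) else 0)"
      by (rule sum.cong) (auto simp: S_def vdim_zero)
    also have "\<dots> = real_of_rat (\<eta> k0) * real (vdim K)"
      using k0 by (subst sum.delta) auto
    finally have s3: "(\<Sum>k=1..L. real_of_rat (\<eta> k) * real (vdim (S (Inr k)))) = real_of_rat (\<eta> k0) * real (vdim K)" .
    have "vdim K > 0" using dim_pos[OF Kc Kne] Ksub by (simp add: vsubspace_def)
    moreover have "real_of_rat (\<eta> k0) > 0" using assms(10) k0 by simp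
    ultimately have "real_of_rat (\<eta> k0) * real (vdim K) * real (\<Sum>v\<in>verts Q. \<alpha> v) > 0"
      using sumpos by simp
    moreover have "real_of_rat (\<eta> k0) * real (vdim K) * real (\<Sum>v\<in>verts Q. \<alpha> v) \<le> 0"
      using ineq unfolding s1 s2 s3 by simp
    ultimately show False by linarith
  qed
  have injL: "inj_on (mat_app (\<beta> L) (\<beta> L) (B (Inr L))) (carrier_sp (\<beta> L))"
    using key[of L] assms(5) assms(8) by (intro inj_from_kernel) simp
  have part1: "bij_betw (mat_app (\<alpha> z) (\<beta> L) (B (Inr L))) (carrier_sp (\<beta> L)) (carrier_sp (\<alpha> z))"
    using injL inj_surj[OF injL] assms(8) by (simp add: bij_betw_def)
  have part2: "\<forall>k\<in>{1..<L}. inj_on (mat_app (\<beta> (k + 1)) (\<beta> k) (B (Inr k))) (carrier_sp (\<beta> k))"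
  proof
    fix k assume k: "k \<in> {1..<L}"
    then have "k \<in> {1..L}" by simp
    from key[OF this] k show "inj_on (mat_app (\<beta> (k + 1)) (\<beta> k) (B (Inr k))) (carrier_sp (\<beta> k))"
      by (intro inj_from_kernel) simp
  qed
  show ?thesis using part1 part2 by blast
qed

end
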